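(* Let $a,b,c$ be positive numbers with $a<b<c$, $\lfloor c/b\rfloor\ge2$, $b-a<c_0<a$ and $0\le c_1\le2a-b$, where $c_0=c-\lfloor c/b\rfloor b$ and $c_1=c-c_0-\lfloor(c-c_0)/a\rfloor a$. Suppose $\mathcal S_{a,b,c}\ne\emptyset$ and either $a/b\notin\mathbb Q$, or $a/b=p/q$ and $c\in(b/q)\mathbb Z$ for some coprime positive integers $p,q$. Then for every $t\in\mathcal S_{a,b,c}$, $$Y_{a,b,c}(R_{a,b,c}(t))-Y_{a,b,c}(t)-Y_{a,b,c}(c_1+b-a)\in Y_{a,b,c}(a)\mathbb Z.$$
   Context: For $a,b,c>0$ and $t\in\mathbb R$, $\mathbf M_{a,b,c}(t)=(\chi_{[0,c)}(t-\mu+\lambda))_{\mu\in a\mathbb Z,\lambda\in b\mathbb Z}$ is the infinite matrix with rows indexed by $a\mathbb Z$ and columns by $b\mathbb Z$, acting by $(\mathbf M_{a,b,c}(t)\mathbf x)(\mu)=\sum_{\lambda\in b\mathbb Z}\chi_{[0,c)}(t-\mu+\lambda)\mathbf x(\lambda)$. $\mathcal B_b^0$ is the set of vectors $(\mathbf x(\lambda))_{\lambda\in b\mathbb Z}$ with entries in $\{0,1\}$ and $\mathbf x(0)=1$. $\mathbf 1$ denotes the vector indexed by $a\mathbb Z$ with all entries $1$. $\mathcal S_{a,b,c}=\{t:\mathbf M_{a,b,c}(t)\mathbf x=\mathbf 1\text{ for some }\mathbf x\in\mathcal B_b^0\}$. $R_{a,b,c}(t)=t+\lfloor c/b\rfloor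 b+b$ if $t\in[0,c_0+a-b)+a\mathbb Z$, $R_{a,b,c}(t)=t$ if $t\in[c_0+a-b,c_0)+a\mathbb Z$, $R_{a,b,c}(t)=t+\lfloor c/b\rfloor b$ if $t\in[c_0,a)+a\mathbb Z$. The holes-removal map is $Y_{a,b,c}(t)=\operatorname{sgn}(t)\,|[\min(0,t),\max(0,t))\cap\mathcal S_{a,b,c}|$ with $|\cdot|$ Lebesgue measure. $A+a\mathbb Z=\{x+ak:x\in A,k\in\mathbb Z\}$. *)

theory Defs
  imports "HOL-Analysis.Analysis"
begin

definition chi0 :: "real \<Rightarrow> real \<Rightarrow> real" where
  "chi0 c s = (if 0 \<le> s \<and> s < c then 1 else 0)"

text \<open>Entry of M_{a,b,c}(t) in row mu = m*a and column lambda = k*b (m,k integers).\<close>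
definition Mentry :: "real \<Rightarrow> real \<Rightarrow> real \<Rightarrow> real \<Rightarrow> int \<Rightarrow> int \<Rightarrow> real" where
  "Mentry a b c t m k = chi0 c (t - of_int m * a + of_int k * b)"

text \<open>(M x)(mu) for mu = m*a; only finitely many entries of a row are nonzero.\<close>
definition Mapply :: "real \<Rightarrow> real \<Rightarrow> real \<Rightarrow> real \<Rightarrow> (int \<Rightarrow> real) \<Rightarrow> int \<Rightarrow> real" where
  "Mapply a b c t x m = (\<Sum>k\<in>{k. Mentry a b c t m k \<noteq> 0}. Mentry a b c t m k * x k)"

text \<open>B_b^0: 0/1 vectors indexed by bZ (k <-> k*b) with x(0) = 1.\<close>
definition Bb0 :: "(int \<Rightarrow> real) set" where
  "Bb0 = {x. (\<forall>k. x k \<in> {0, 1}) \<and> x 0 = 1}"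

definition Sabc :: "real \<Rightarrow> real \<Rightarrow> real \<Rightarrow> real set" where
  "Sabc a b c = {t. \<exists>x\<in>Bb0. \<forall>m. Mapply a b c t x m = 1}"

definition c0 :: "real \<Rightarrow> real \<Rightarrow> real \<Rightarrow> real" where
  "c0 a b c = c - of_int \<lfloor>c / b\<rfloor> * b"

definition c1 :: "real \<Rightarrow> real \<Rightarrow> real \<Rightarrow> real" where
  "c1 a b c = c - c0 a b c - of_int \<lfloor>(c - c0 a b c) / a\<rfloor> * a"

definition in_per :: "real \<Rightarrow> real \<Rightarrow> real \<Rightarrow> real \<Rightarrow> bool" where
  "in_per a l u t = (\<exists>k::int. l \<le> t - of_int k * a \<and> t - of_int k * a < u)"

definition Rabc :: "real \<Rightarrow> real \<Rightarrow> real \<Rightarrow> real \<Rightarrow> real" where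
  "Rabc a b c t =
     (if in_per a 0 (c0 a b c + a - b) t then t + of_int \<lfloor>c / b\<rfloor> * b + b
      else if in_per a (c0 a b c + a - b) (c0 a b c) t then t
      else if in_per a (c0 a b c) a t then t + of_int \<lfloor>c / b\<rfloor> * b
      else undefined)"

definition Yabc :: "real \<Rightarrow> real \<Rightarrow> real \<Rightarrow> real \<Rightarrow> real" where
  "Yabc a b c t = sgn t * measure lebesgue ({min 0 t..<max 0 t} \<inter> Sabc a b c)"

end

theory Submission
  imports Defs
begin


lemma int_less_of_mult: "0 < (a::real) \<Longrightarrow> of_int i * a < of_int j * a \<Longrightarrow> i < j"
  by (simp add: mult_less_cancel_right)
lemma int_le_of_mult: "0 < (a::real) \<Longrightarrow> of_int i * a \<le> of_int j * a \<Longrightarrow> i \<le> j"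
  by (simp add: mult_le_cancel_right)
lemma mult_mono_int: "0 < (b::real) \<Longrightarrow> i \<le> j \<Longrightarrow> of_int i * b \<le> of_int j * b"
  by (simp add: mult_le_cancel_right)

lemma ex1_obtain: assumes "\<exists>!x. P x" obtains x where "P x" "\<And>y. P y \<Longrightarrow> y = x"
  using assms by (auto simp: Ex1_def)

lemma ex1_cong: "(\<And>k. P k \<longleftrightarrow> Q k) \<Longrightarrow> (\<exists>!k. P k) \<Longrightarrow> \<exists>!k. Q k"
  by simp

definition W :: "real \<Rightarrow> real \<Rightarrow> real \<Rightarrow> real \<Rightarrow> int \<Rightarrow> int \<Rightarrow> bool" where
  "W a b c t m k \<longleftrightarrow> 0 \<le> t - of_int m * a + of_int k * b \<and> t - of_int m * a + of_int k * b < c"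

definition Good :: "real \<Rightarrow> real \<Rightarrow> real \<Rightarrow> real \<Rightarrow> int set \<Rightarrow> bool" where
  "Good a b c t \<Lambda> \<longleftrightarrow> (\<forall>m. \<exists>!k. k \<in> \<Lambda> \<and> W a b c t m k)"

lemma finite_W:
  assumes "0 < b" shows "finite {k. W a b c t m k}"
proof -
  have "{k. W a b c t m k} \<subseteq> {\<lceil>(of_int m * a - t)/b\<rceil> .. \<lfloor>(of_int m * a - t + c)/b\<rfloor>}"
  proof
    fix k assume "k \<in> {k. W a b c t m k}"
    then have h: "0 \<le> t - of_int m * a + of_int k * b" "t - of_int m * a + of_int k * b < c"
      by (auto simp: W_def)
    have "(of_int m * a - t)/b \<le> of_int k" using h assms by (simp add: divide_le_eq)
    moreover have "of_int k \<le> (of_int m * a - t + c)/b" using h assms by (simp add: le_divide_eq)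
    ultimately show "k \<in> {\<lceil>(of_int m * a - t)/b\<rceil> .. \<lfloor>(of_int m * a - t + c)/b\<rfloor>}"
      by (simp add: ceiling_le_iff le_floor_iff)
  qed
  then show ?thesis by (rule finite_subset) simp
qed

lemma Mapply_card:
  assumes "0 < b" "\<forall>k. x k \<in> {0,1}"
  shows "Mapply a b c t x m = real (card {k. W a b c t m k \<and> x k = 1})"
proof -
  have e: "\<And>k. Mentry a b c t m k = (if W a b c t m k then 1 else 0)"
    by (simp add: Mentry_def chi0_def W_def)
  have K: "{k. Mentry a b c t m k \<noteq> 0} = {k. W a b c t m k}" by (simp add: e)
  have "Mapply a b c t x m = (\<Sum>k\<in>{k. W a b c t m k}. x k)"
    unfolding Mapply_def K by (rule sum.cong) (auto simp: e)
  also have "\<dots> = (\<Sum>k\<in>{k. W a b c t m k}. if x k = 1 then 1 else 0)"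
    by (rule sum.cong) (use assms(2) in auto)
  also have "\<dots> = real (card {k\<in>{k. W a b c t m k}. x k = 1})"
    by (simp add: sum.If_cases finite_W[OF assms(1)] Int_def)
  finally show ?thesis by simp
qed

lemma card1_iff: "finite A \<Longrightarrow> card A = 1 \<longleftrightarrow> (\<exists>!x. x \<in> A)"
  by (metis One_nat_def card_1_singleton_iff ex_in_conv is_singletonI' is_singleton_the_elem singleton_iff)

lemma S_iff:
  assumes "0 < b"
  shows "t \<in> Sabc a b c \<longleftrightarrow> (\<exists>\<Lambda>. 0 \<in> \<Lambda> \<and> Good a b c t \<Lambda>)"
proof
  assume "t \<in> Sabc a b c"
  then obtain x where x: "x \<in> Bb0" "\<forall>m. Mapply a b c t x m = 1" by (auto simp: Sabc_def)
  have x01: "\<forall>k. x k \<in> {0,1}" "x 0 = 1" using x(1) by (auto simp: Bb0_def)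
  have "Good a b c t {k. x k = 1}"
    unfolding Good_def
  proof
    fix m
    have "real (card {k. W a b c t m k \<and> x k = 1}) = 1"
      using x(2) Mapply_card[OF assms x01(1)] by metis
    then have "card {k. W a b c t m k \<and> x k = 1} = 1" by linarith
    moreover have "finite {k. W a b c t m k \<and> x k = 1}"
      using finite_W[OF assms] by (rule finite_subset[rotated]) auto
    ultimately have "\<exists>!k. k \<in> {k. W a b c t m k \<and> x k = 1}"
      using card1_iff by blast
    then show "\<exists>!k. k \<in> {k. x k = 1} \<and> W a b c t m k"
      by (rule ex1_cong[rotated]) auto
  qed
  then show "\<exists>\<Lambda>. 0 \<in> \<Lambda> \<and> Good a b c t \<Lambda>" using x01(2)
    by (intro exI[of _ "{k. x k = 1}"]) simp
next
  assume "\<exists>\<Lambda>. 0 \<in> \<Lambda> \<and> Good a b c t \<Lambda>"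
  then obtain \<Lambda> where L: "0 \<in> \<Lambda>" "Good a b c t \<Lambda>" by blast
  define x where "x = (\<lambda>k. if k \<in> \<Lambda> then 1 else 0::real)"
  have x01: "\<forall>k. x k \<in> {0,1}" by (simp add: x_def)
  have "x \<in> Bb0" using L by (simp add: Bb0_def x_def)
  moreover have "\<forall>m. Mapply a b c t x m = 1"
  proof
    fix m
    have fin: "finite {k. W a b c t m k \<and> x k = 1}"
      using finite_W[OF assms] by (rule finite_subset[rotated]) auto
    have xe: "{k. W a b c t m k \<and> x k = 1} = {k. k \<in> \<Lambda> \<and> W a b c t m k}"
      by (auto simp: x_def)
    have "\<exists>!k. k \<in> \<Lambda> \<and> W a b c t m k" using L(2) unfolding Good_def by blast
    then have "\<exists>!k. k \<in> {k. W a b c t m k \<and> x k = 1}" unfolding xe by simp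
    then have "card {k. W a b c t m k \<and> x k = 1} = 1" using card1_iff[OF fin] by blast
    then show "Mapply a b c t x m = 1" using Mapply_card[OF assms x01] by simp
  qed
  ultimately show "t \<in> Sabc a b c" by (auto simp: Sabc_def)
qed



locale abc =
  fixes a b c :: real
  assumes a0: "0 < a" and ab: "a < b" and bc: "b < c" and L2: "2 \<le> \<lfloor>c/b\<rfloor>"
    and c0lo: "b - a < c0 a b c" and c0hi: "c0 a b c < a"
    and c1lo: "0 \<le> c1 a b c" and c1hi: "c1 a b c \<le> 2*a - b"
begin

abbreviation "L \<equiv> \<lfloor>c/b\<rfloor>"
abbreviation "C0 \<equiv> c0 a b c"
abbreviation "C1 \<equiv> c1 a b c"
abbreviation "N \<equiv> \<lfloor>(c - C0)/a\<rfloor>"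
abbreviation "WW \<equiv> W a b c"
abbreviation "GG \<equiv> Good a b c"

lemma b0: "0 < b" using a0 ab by linarith

lemma cL: "c = of_int L * b + C0" by (simp add: c0_def)

lemma C1eq: "C1 = of_int L * b - of_int N * a"
  by (simp add: c1_def c0_def)

lemma good_per: "GG t \<Lambda> \<Longrightarrow> GG (t + of_int j * a) \<Lambda>"
  unfolding Good_def
proof
  fix m assume g: "\<forall>m. \<exists>!k. k \<in> \<Lambda> \<and> WW t m k"
  have e: "\<And>k. WW (t + of_int j * a) m k \<longleftrightarrow> WW t (m - j) k"
    by (simp add: W_def algebra_simps)
  show "\<exists>!k. k \<in> \<Lambda> \<and> WW (t + of_int j * a) m k"
    using g[rule_format, of "m - j"] by (rule ex1_cong[rotated]) (simp add: e)
qed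

lemma good_shift: "GG t \<Lambda> \<Longrightarrow> GG (t + of_int p * b) {k. k + p \<in> \<Lambda>}"
  unfolding Good_def
proof
  fix m assume g: "\<forall>m. \<exists>!k. k \<in> \<Lambda> \<and> WW t m k"
  have e: "\<And>k. WW (t + of_int p * b) m k \<longleftrightarrow> WW t m (k + p)"
    by (simp add: W_def algebra_simps)
  obtain k0 where k0: "k0 \<in> \<Lambda> \<and> WW t m k0" "\<And>y. y \<in> \<Lambda> \<and> WW t m y \<Longrightarrow> y = k0"
    using g[rule_format, of m] by (metis ex1_obtain)
  show "\<exists>!k. k \<in> {k. k + p \<in> \<Lambda>} \<and> WW (t + of_int p * b) m k"
  proof (rule ex1I[of _ "k0 - p"])
    show "k0 - p \<in> {k. k + p \<in> \<Lambda>} \<and> WW (t + of_int p * b) m (k0 - p)"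
      using k0(1) by (simp add: e)
  next
    fix y assume "y \<in> {k. k + p \<in> \<Lambda>} \<and> WW (t + of_int p * b) m y"
    then have "y + p = k0" using k0(2) by (simp add: e)
    then show "y = k0 - p" by simp
  qed
qed

lemma uniq0:
  assumes g: "GG t \<Lambda>" and z: "0 \<in> \<Lambda>" and w: "WW t m 0" and k: "k \<in> \<Lambda>" "WW t m k"
  shows "k = 0"
proof -
  obtain k0 where k0: "k0 \<in> \<Lambda> \<and> WW t m k0" "\<And>y. y \<in> \<Lambda> \<and> WW t m y \<Longrightarrow> y = k0"
    using g unfolding Good_def by (metis ex1_obtain)
  have "0 = k0" using k0(2) z w by blast
  moreover have "k = k0" using k0(2) k by blast
  ultimately show ?thesis by simp
qed

lemma fwd_local:
  assumes g: "GG t \<Lambda>" and z: "0 \<in> \<Lambda>" and j1: "of_int j * a \<le> t" and j2: "t < of_int j * a + a"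
  shows "t < of_int j * a + C0 + a - b \<Longrightarrow> L + 1 \<in> \<Lambda> \<and> (\<forall>k. 0 < k \<and> k \<le> L \<longrightarrow> k \<notin> \<Lambda>)"
    and "of_int j * a + C0 \<le> t \<Longrightarrow> L \<in> \<Lambda> \<and> (\<forall>k. 0 < k \<and> k < L \<longrightarrow> k \<notin> \<Lambda>)"
    and "of_int j * a + C0 + a - b \<le> t \<Longrightarrow> t < of_int j * a + C0 \<Longrightarrow> False"
proof -
  define r where "r = t - of_int j * a"
  have r0: "0 \<le> r" "r < a" using j1 j2 by (auto simp: r_def)
  have Wj: "\<And>k. WW t j k \<longleftrightarrow> 0 \<le> r + of_int k * b \<and> r + of_int k * b < c"
    by (simp add: W_def r_def)
  have Wj1: "\<And>k. WW t (j+1) k \<longleftrightarrow> 0 \<le> r - a + of_int k * b \<and> r - a + of_int k * b < c"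
    by (simp add: W_def r_def algebra_simps)
  have cc: "c = of_int L * b + C0" by (rule cL)
  have w0: "WW t j 0" using Wj r0 a0 ab bc by simp
  have u: "\<And>k. k \<in> \<Lambda> \<Longrightarrow> WW t j k \<Longrightarrow> k = 0" using uniq0[OF g z w0] by blast
  obtain k1 where k1: "k1 \<in> \<Lambda>" "WW t (j+1) k1"
    using g unfolding Good_def by (metis ex1_obtain)
  have k1a: "0 \<le> r - a + of_int k1 * b" "r - a + of_int k1 * b < c" using k1(2) Wj1 by auto
  have k1pos: "0 < k1"
  proof (rule ccontr)
    assume "\<not> 0 < k1" then have "k1 \<le> 0" by simp
    then have "of_int k1 * b \<le> of_int 0 * b" using mult_mono_int[OF b0] by blast
    then show False using k1a r0 by simp
  qed
  have L1: "1 \<le> L" using L2 by simp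
  have Lb: "of_int L * b \<ge> b" using mult_mono_int[OF b0 L1] by simp
  show "t < of_int j * a + C0 + a - b \<Longrightarrow> L + 1 \<in> \<Lambda> \<and> (\<forall>k. 0 < k \<and> k \<le> L \<longrightarrow> k \<notin> \<Lambda>)"
  proof -
    assume h: "t < of_int j * a + C0 + a - b"
    have rc: "r < C0 + a - b" using h by (simp add: r_def)
    have nz: "\<forall>k. 0 < k \<and> k \<le> L \<longrightarrow> k \<notin> \<Lambda>"
    proof (intro allI impI notI)
      fix k assume kk: "0 < k \<and> k \<le> L" and kl: "k \<in> \<Lambda>"
      have "of_int k * b \<le> of_int L * b" using mult_mono_int[OF b0, of k L] kk by simp
      moreover have "of_int 1 * b \<le> of_int k * b" using mult_mono_int[OF b0, of 1 k] kk by simp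
      ultimately have "0 \<le> r + of_int k * b \<and> r + of_int k * b < c" using r0 rc ab cc b0 by linarith
      then have "WW t j k" using Wj by simp
      then show False using u kl kk by auto
    qed
    have "k1 = L + 1"
    proof (rule ccontr)
      assume ne: "k1 \<noteq> L + 1"
      have "k1 \<ge> L + 2" using nz k1 k1pos ne by force
      then have "of_int (L+2) * b \<le> of_int k1 * b" using mult_mono_int[OF b0] by blast
      moreover have "of_int (L+2) * b = of_int L * b + 2 * b" by (simp add: algebra_simps)
      ultimately show False using k1a cc r0 c0hi ab by linarith
    qed
    then show ?thesis using nz k1 by simp
  qed
  show "of_int j * a + C0 \<le> t \<Longrightarrow> L \<in> \<Lambda> \<and> (\<forall>k. 0 < k \<and> k < L \<longrightarrow> k \<notin> \<Lambda>)"
  proof -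
    assume h: "of_int j * a + C0 \<le> t"
    have rc: "C0 \<le> r" using h by (simp add: r_def)
    have nz: "\<forall>k. 0 < k \<and> k < L \<longrightarrow> k \<notin> \<Lambda>"
    proof (intro allI impI notI)
      fix k assume kk: "0 < k \<and> k < L" and kl: "k \<in> \<Lambda>"
      have "of_int k * b \<le> of_int (L - 1) * b" using mult_mono_int[OF b0, of k "L - 1"] kk by simp
      moreover have "of_int 1 * b \<le> of_int k * b" using mult_mono_int[OF b0, of 1 k] kk by simp
      moreover have "of_int (L - 1) * b = of_int L * b - b" by (simp add: algebra_simps)
      ultimately have "0 \<le> r + of_int k * b \<and> r + of_int k * b < c" using r0 rc ab cc b0 c0lo by linarith
      then have "WW t j k" using Wj by simp
      then show False using u kl kk by auto
    qed
    have "k1 = L"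
    proof (rule ccontr)
      assume ne: "k1 \<noteq> L"
      have "k1 \<ge> L + 1" using nz k1 k1pos ne by force
      then have "of_int (L+1) * b \<le> of_int k1 * b" using mult_mono_int[OF b0] by blast
      moreover have "of_int (L+1) * b = of_int L * b + b" by (simp add: algebra_simps)
      ultimately show False using k1a cc rc ab r0 by linarith
    qed
    then show ?thesis using nz k1 by simp
  qed
  show "of_int j * a + C0 + a - b \<le> t \<Longrightarrow> t < of_int j * a + C0 \<Longrightarrow> False"
  proof -
    assume h1: "of_int j * a + C0 + a - b \<le> t" and h2: "t < of_int j * a + C0"
    have rc: "C0 + a - b \<le> r" "r < C0" using h1 h2 by (auto simp: r_def)
    have nz: "\<forall>k. 0 < k \<and> k \<le> L \<longrightarrow> k \<notin> \<Lambda>"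
    proof (intro allI impI notI)
      fix k assume kk: "0 < k \<and> k \<le> L" and kl: "k \<in> \<Lambda>"
      have "of_int k * b \<le> of_int L * b" using mult_mono_int[OF b0, of k L] kk by simp
      moreover have "of_int 1 * b \<le> of_int k * b" using mult_mono_int[OF b0, of 1 k] kk by simp
      ultimately have "0 \<le> r + of_int k * b \<and> r + of_int k * b < c" using r0 rc ab cc b0 by linarith
      then have "WW t j k" using Wj by simp
      then show False using u kl kk by auto
    qed
    have "k1 \<ge> L + 1" using nz k1 k1pos by force
    then have "of_int (L+1) * b \<le> of_int k1 * b" using mult_mono_int[OF b0] by blast
    moreover have "of_int (L+1) * b = of_int L * b + b" by (simp add: algebra_simps)
    ultimately show False using k1a cc rc by linarith
  qed
qed

end


context abc begin

definition rho :: "real \<Rightarrow> real" where "rho x = x - of_int \<lfloor>x/a\<rfloor> * a"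

lemma floor_bounds: "of_int \<lfloor>x/a\<rfloor> * a \<le> x" "x < of_int \<lfloor>x/a\<rfloor> * a + a"
proof -
  have "of_int \<lfloor>x/a\<rfloor> \<le> x/a" by (rule of_int_floor_le)
  then show "of_int \<lfloor>x/a\<rfloor> * a \<le> x" using a0 by (simp add: le_divide_eq)
  have "x/a < of_int \<lfloor>x/a\<rfloor> + 1" by (rule real_of_int_floor_add_one_gt)
  then have "x < (of_int \<lfloor>x/a\<rfloor> + 1) * a" using pos_divide_less_eq[OF a0] by blast
  then show "x < of_int \<lfloor>x/a\<rfloor> * a + a" by (simp add: algebra_simps)
qed

lemma floor_uniq: "of_int j * a \<le> x \<Longrightarrow> x < of_int j * a + a \<Longrightarrow> \<lfloor>x/a\<rfloor> = j"
proof -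
  assume h: "of_int j * a \<le> x" "x < of_int j * a + a"
  have "of_int j \<le> x/a" using h a0 by (simp add: le_divide_eq)
  moreover have "x/a < of_int j + 1" using h a0 by (simp add: divide_less_eq algebra_simps)
  ultimately show ?thesis by (simp add: floor_eq_iff)
qed

lemma rho_bounds: "0 \<le> rho x" "rho x < a"
  using floor_bounds[of x] by (auto simp: rho_def)

lemma rho_eq: "of_int j * a \<le> x \<Longrightarrow> x < of_int j * a + a \<Longrightarrow> rho x = x - of_int j * a"
  using floor_uniq by (simp add: rho_def)

definition g :: "real \<Rightarrow> int" where
  "g t = (if rho t < C0 + a - b then L + 1 else L)"

lemma g_ge: "2 \<le> g t" using L2 by (simp add: g_def)

lemma next_step:
  assumes G: "GG t \<Lambda>" and z: "0 \<in> \<Lambda>"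
  shows "g t \<in> \<Lambda> \<and> (\<forall>k. 0 < k \<and> k < g t \<longrightarrow> k \<notin> \<Lambda>) \<and> (rho t < C0 + a - b \<or> C0 \<le> rho t)"
proof -
  define j where "j = \<lfloor>t/a\<rfloor>"
  have j: "of_int j * a \<le> t" "t < of_int j * a + a" using floor_bounds[of t] by (auto simp: j_def)
  have rj: "rho t = t - of_int j * a" by (simp add: rho_def j_def)
  show ?thesis
  proof (cases "rho t < C0 + a - b")
    case True
    then have "t < of_int j * a + C0 + a - b" using rj by simp
    from fwd_local(1)[OF G z j this] True show ?thesis by (auto simp: g_def)
  next
    case False
    show ?thesis
    proof (cases "C0 \<le> rho t")
      case True
      then have "of_int j * a + C0 \<le> t" using rj by simp
      from fwd_local(2)[OF G z j this] False True show ?thesis by (auto simp: g_def)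
    next
      case F2: False
      have "of_int j * a + C0 + a - b \<le> t" "t < of_int j * a + C0" using False F2 rj by auto
      from fwd_local(3)[OF G z j this] show ?thesis by simp
    qed
  qed
qed

lemma has_neg:
  assumes G: "GG t \<Lambda>" shows "\<exists>k\<in>\<Lambda>. k < 0"
proof -
  define m where "m = \<lfloor>(t - c)/a\<rfloor>"
  have m: "of_int m * a \<le> t - c" using floor_bounds[of "t - c"] by (simp add: m_def)
  obtain k where k: "k \<in> \<Lambda>" "WW t m k" using G unfolding Good_def by (metis ex1_obtain)
  have "t - of_int m * a + of_int k * b < c" using k(2) by (simp add: W_def)
  then have kb: "of_int k * b < 0" using m by linarith
  have "k < 0"
  proof (rule ccontr)
    assume "\<not> k < 0" then have "0 \<le> of_int k * b" using b0 by simp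
    then show False using kb by simp
  qed
  then show ?thesis using k by blast
qed

lemma prev_exists:
  assumes G: "GG t \<Lambda>" shows "\<exists>q\<in>\<Lambda>. q < 0 \<and> (\<forall>k\<in>\<Lambda>. q < k \<longrightarrow> 0 \<le> k)"
proof -
  obtain k0 where k0: "k0 \<in> \<Lambda>" "k0 < 0" using has_neg[OF G] by blast
  define A where "A = {k\<in>\<Lambda>. k0 \<le> k \<and> k < 0}"
  have fA: "finite A" by (rule finite_subset[of _ "{k0..0}"]) (auto simp: A_def)
  have nA: "A \<noteq> {}" using k0 by (auto simp: A_def)
  define q where "q = Max A"
  have qA: "q \<in> A" using Max_in[OF fA nA] by (simp add: q_def)
  have qmax: "\<And>k. k \<in> A \<Longrightarrow> k \<le> q" using Max_ge[OF fA] by (simp add: q_def)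
  show ?thesis
  proof (intro bexI conjI ballI impI)
    show "q \<in> \<Lambda>" "q < 0" using qA by (auto simp: A_def)
  next
    fix k assume "k \<in> \<Lambda>" "q < k"
    show "0 \<le> k"
    proof (rule ccontr)
      assume "\<not> 0 \<le> k"
      then have "k \<in> A" using \<open>k \<in> \<Lambda>\<close> \<open>q < k\<close> qA by (auto simp: A_def)
      then show False using qmax \<open>q < k\<close> by force
    qed
  qed
qed

definition pv :: "real \<Rightarrow> int" where
  "pv t = (if C0 \<le> rho (t - of_int L * b) then L else L + 1)"

lemma pv_ge: "2 \<le> pv t" using L2 by (simp add: pv_def)

lemma prev_step:
  assumes G: "GG t \<Lambda>" and z: "0 \<in> \<Lambda>"
  shows "- pv t \<in> \<Lambda> \<and> (\<forall>k. - pv t < k \<and> k < 0 \<longrightarrow> k \<notin> \<Lambda>) \<and> g (t + of_int (- pv t) * b) = pv t"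
proof -
  obtain q where q: "q \<in> \<Lambda>" "q < 0" "\<And>k. k \<in> \<Lambda> \<Longrightarrow> q < k \<Longrightarrow> 0 \<le> k"
    using prev_exists[OF G] by blast
  define s where "s = t + of_int q * b"
  define \<Lambda>' where "\<Lambda>' = {k. k + q \<in> \<Lambda>}"
  have G': "GG s \<Lambda>'" unfolding s_def \<Lambda>'_def by (rule good_shift[OF G])
  have z': "0 \<in> \<Lambda>'" using q by (simp add: \<Lambda>'_def)
  note ns = next_step[OF G' z']
  have mq: "- q \<in> \<Lambda>'" using z by (simp add: \<Lambda>'_def)
  have none: "\<And>k. 0 < k \<Longrightarrow> k < - q \<Longrightarrow> k \<notin> \<Lambda>'"
  proof
    fix k assume "0 < k" "k < - q" "k \<in> \<Lambda>'"
    then have "k + q \<in> \<Lambda>" "q < k + q" "k + q < 0" by (auto simp: \<Lambda>'_def)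
    then show False using q(3) by force
  qed
  have gs: "g s = - q"
  proof (rule ccontr)
    assume ne: "g s \<noteq> - q"
    show False
    proof (cases "g s < - q")
      case True
      then show False using none[of "g s"] ns g_ge[of s] by auto
    next
      case False
      then have "- q < g s" using ne by simp
      then show False using ns mq q(2) by auto
    qed
  qed
  have pvs: "pv t = g s"
  proof (cases "rho s < C0 + a - b")
    case False
    then have gL: "g s = L" by (simp add: g_def)
    have "C0 \<le> rho s" using ns False by auto
    moreover have "q = - L" using gs gL by simp
    then have "t - of_int L * b = s" by (simp add: s_def)
    ultimately show ?thesis using gL by (simp add: pv_def)
  next
    case True
    then have gL: "g s = L + 1" by (simp add: g_def)
    have "q = - L - 1" using gs gL by simp
    then have qq: "real_of_int q = - real_of_int L - 1" by simp
    have ts: "t - of_int L * b = s + b" unfolding s_def qq by (simp add: algebra_simps)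
    define j where "j = \<lfloor>s/a\<rfloor>"
    have rj: "rho s = s - of_int j * a" by (simp add: rho_def j_def)
    have r0: "0 \<le> rho s" by (rule rho_bounds)
    have e1: "of_int (j+1) * a \<le> s + b" using rj r0 ab by (simp add: algebra_simps)
    have e2: "s + b < of_int (j+1) * a + a" using rj True c0hi by (simp add: algebra_simps)
    have "rho (s + b) = s + b - of_int (j+1) * a" by (rule rho_eq[OF e1 e2])
    then have "rho (s + b) < C0" using rj True by (simp add: algebra_simps)
    then show ?thesis using ts gL by (simp add: pv_def)
  qed
  have e: "s = t + of_int (- pv t) * b" using pvs gs by (simp add: s_def)
  have m1: "- pv t \<in> \<Lambda>" using pvs gs q by simp
  have m2: "\<forall>k. - pv t < k \<and> k < 0 \<longrightarrow> k \<notin> \<Lambda>"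
  proof (intro allI impI notI)
    fix k assume "- pv t < k \<and> k < 0" "k \<in> \<Lambda>"
    then show False using q(3)[of k] pvs gs by simp
  qed
  have m3: "g (t + of_int (- pv t) * b) = pv t" using e pvs by simp
  show ?thesis using m1 m2 m3 by blast
qed

primrec fw :: "nat \<Rightarrow> real \<Rightarrow> int" where
  "fw 0 t = 0"
| "fw (Suc n) t = g t + fw n (t + of_int (g t) * b)"

primrec bw :: "nat \<Rightarrow> real \<Rightarrow> int" where
  "bw 0 t = 0"
| "bw (Suc n) t = - pv t + bw n (t + of_int (- pv t) * b)"

lemma fw_in: "GG t \<Lambda> \<Longrightarrow> 0 \<in> \<Lambda> \<Longrightarrow> fw n t \<in> \<Lambda>"
proof (induction n arbitrary: t \<Lambda>)
  case 0 then show ?case by simp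
next
  case (Suc n)
  have "g t \<in> \<Lambda>" using next_step[OF Suc.prems] by blast
  then have "fw n (t + of_int (g t) * b) \<in> {k. k + g t \<in> \<Lambda>}"
    using Suc.IH[OF good_shift[OF Suc.prems(1)]] by simp
  then show ?case by (simp add: add.commute)
qed

lemma bw_in: "GG t \<Lambda> \<Longrightarrow> 0 \<in> \<Lambda> \<Longrightarrow> bw n t \<in> \<Lambda>"
proof (induction n arbitrary: t \<Lambda>)
  case 0 then show ?case by simp
next
  case (Suc n)
  have m: "- pv t \<in> \<Lambda>" using prev_step[OF Suc.prems] by blast
  have G': "GG (t + of_int (- pv t) * b) {k. k + (- pv t) \<in> \<Lambda>}" by (rule good_shift[OF Suc.prems(1)])
  have z': "0 \<in> {k. k + (- pv t) \<in> \<Lambda>}" using m by simp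
  have "bw n (t + of_int (- pv t) * b) \<in> {k. k + (- pv t) \<in> \<Lambda>}" by (rule Suc.IH[OF G' z'])
  then show ?case by (simp only: mem_Collect_eq bw.simps add.commute)
qed

lemma in_fw_aux: "\<forall>t \<Lambda> k. GG t \<Lambda> \<longrightarrow> 0 \<in> \<Lambda> \<longrightarrow> k \<in> \<Lambda> \<longrightarrow> 0 \<le> k \<longrightarrow> k < int M \<longrightarrow> (\<exists>n. fw n t = k)"
proof (induction M)
  case 0 then show ?case by simp
next
  case (Suc M)
  show ?case
  proof (intro allI impI)
    fix t \<Lambda> k assume G: "GG t \<Lambda>" and z: "0 \<in> \<Lambda>" and k: "k \<in> \<Lambda>" "0 \<le> k" "k < int (Suc M)"
    show "\<exists>n. fw n t = k"
    proof (cases "k = 0")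
      case True then show ?thesis by (intro exI[of _ 0]) simp
    next
      case False
      note ns = next_step[OF G z]
      have kg: "g t \<le> k" using ns k False by force
      define \<Lambda>' where "\<Lambda>' = {k. k + g t \<in> \<Lambda>}"
      have G': "GG (t + of_int (g t) * b) \<Lambda>'" unfolding \<Lambda>'_def by (rule good_shift[OF G])
      have z': "0 \<in> \<Lambda>'" using ns by (simp add: \<Lambda>'_def)
      have k': "k - g t \<in> \<Lambda>'" "0 \<le> k - g t" "k - g t < int M" using k kg g_ge[of t] by (auto simp: \<Lambda>'_def)
      obtain n where "fw n (t + of_int (g t) * b) = k - g t" using Suc.IH G' z' k' by blast
      then show ?thesis by (intro exI[of _ "Suc n"]) simp
    qed
  qed
qed

lemma in_bw_aux: "\<forall>t \<Lambda> k. GG t \<Lambda> \<longrightarrow> 0 \<in> \<Lambda> \<longrightarrow> k \<in> \<Lambda> \<longrightarrow> k \<le> 0 \<longrightarrow> - k < int M \<longrightarrow> (\<exists>n. bw n t = k)"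
proof (induction M)
  case 0 then show ?case by simp
next
  case (Suc M)
  show ?case
  proof (intro allI impI)
    fix t \<Lambda> k assume G: "GG t \<Lambda>" and z: "0 \<in> \<Lambda>" and k: "k \<in> \<Lambda>" "k \<le> 0" "- k < int (Suc M)"
    show "\<exists>n. bw n t = k"
    proof (cases "k = 0")
      case True then show ?thesis by (intro exI[of _ 0]) simp
    next
      case False
      note ps = prev_step[OF G z]
      have kg: "k \<le> - pv t" using ps k False by force
      define \<Lambda>' where "\<Lambda>' = {k. k + (- pv t) \<in> \<Lambda>}"
      have G': "GG (t + of_int (- pv t) * b) \<Lambda>'" unfolding \<Lambda>'_def by (rule good_shift[OF G])
      have z': "0 \<in> \<Lambda>'" using ps by (simp add: \<Lambda>'_def)
      have k': "k + pv t \<in> \<Lambda>'" "k + pv t \<le> 0" "- (k + pv t) < int M" using k kg pv_ge[of t] by (auto simp: \<Lambda>'_def)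
      obtain n where "bw n (t + of_int (- pv t) * b) = k + pv t" using Suc.IH G' z' k' by blast
      then show ?thesis by (intro exI[of _ "Suc n"]) simp
    qed
  qed
qed

definition Lam :: "real \<Rightarrow> int set" where
  "Lam t = {k. \<exists>n. fw n t = k} \<union> {k. \<exists>n. bw n t = k}"

lemma Lam_eq:
  assumes G: "GG t \<Lambda>" and z: "0 \<in> \<Lambda>" shows "\<Lambda> = Lam t"
proof
  show "Lam t \<subseteq> \<Lambda>" using fw_in[OF G z] bw_in[OF G z] by (auto simp: Lam_def)
next
  show "\<Lambda> \<subseteq> Lam t"
  proof
    fix k assume k: "k \<in> \<Lambda>"
    show "k \<in> Lam t"
    proof (cases "0 \<le> k")
      case True
      have "k < int (Suc (nat k))" using True by simp
      then obtain n where "fw n t = k" using in_fw_aux[of "Suc (nat k)"] G z k True by blast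
      then show ?thesis by (auto simp: Lam_def)
    next
      case False
      have "- k < int (Suc (nat (- k)))" using False by simp
      then obtain n where "bw n t = k" using in_bw_aux[of "Suc (nat (-k))"] G z k False by force
      then show ?thesis by (auto simp: Lam_def)
    qed
  qed
qed

abbreviation "SS \<equiv> Sabc a b c"

lemma S_Lam: "t \<in> SS \<longleftrightarrow> GG t (Lam t)"
proof
  assume "t \<in> SS"
  then obtain \<Lambda> where "0 \<in> \<Lambda>" "GG t \<Lambda>" using S_iff[OF b0] by blast
  then show "GG t (Lam t)" using Lam_eq by simp
next
  assume "GG t (Lam t)"
  moreover have "0 \<in> Lam t" by (auto simp: Lam_def intro: exI[of _ 0])
  ultimately show "t \<in> SS" using S_iff[OF b0] by blast
qed

end


lemma int_add_meas:
  fixes f h :: "'a \<Rightarrow> int"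
  assumes [measurable]: "f \<in> M \<rightarrow>\<^sub>M count_space UNIV" "h \<in> M \<rightarrow>\<^sub>M count_space UNIV"
  shows "(\<lambda>x. f x + h x) \<in> M \<rightarrow>\<^sub>M count_space UNIV"
  unfolding measurable_count_space_eq2_countable
proof (intro conjI ballI)
  show "(\<lambda>x. f x + h x) \<in> space M \<rightarrow> UNIV" by simp
next
  fix y :: int
  have "(\<lambda>x. f x + h x) -` {y} \<inter> space M = {x \<in> space M. \<exists>z. f x = z \<and> h x = y - z}"
    by auto
  also have "\<dots> \<in> sets M" by measurable
  finally show "(\<lambda>x. f x + h x) -` {y} \<inter> space M \<in> sets M" .
qed

context abc begin

lemma rho_meas[measurable]: "rho \<in> borel_measurable borel"
  unfolding rho_def[abs_def] by measurable

lemma g_meas[measurable]: "g \<in> borel \<rightarrow>\<^sub>M count_space UNIV"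
  unfolding g_def[abs_def] by measurable

lemma pv_meas[measurable]: "pv \<in> borel \<rightarrow>\<^sub>M count_space UNIV"
  unfolding pv_def[abs_def] by measurable

lemma fw_meas[measurable]: "(\<lambda>t. fw n t) \<in> borel \<rightarrow>\<^sub>M count_space UNIV"
proof (induction n)
  case 0 then show ?case by simp
next
  case (Suc n)
  have [measurable]: "(\<lambda>t. t + real_of_int (g t) * b) \<in> borel_measurable borel" by measurable
  have "(\<lambda>t. fw n (t + real_of_int (g t) * b)) \<in> borel \<rightarrow>\<^sub>M count_space UNIV"
    by (rule measurable_compose[OF _ Suc.IH]) measurable
  then show ?case by (simp add: int_add_meas)
qed

lemma bw_meas[measurable]: "(\<lambda>t. bw n t) \<in> borel \<rightarrow>\<^sub>M count_space UNIV"
proof (induction n)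
  case 0 then show ?case by simp
next
  case (Suc n)
  have [measurable]: "(\<lambda>t. t + real_of_int (- pv t) * b) \<in> borel_measurable borel" by measurable
  have "(\<lambda>t. bw n (t + real_of_int (- pv t) * b)) \<in> borel \<rightarrow>\<^sub>M count_space UNIV"
    by (rule measurable_compose[OF _ Suc.IH]) measurable
  moreover have "(\<lambda>t. - pv t) \<in> borel \<rightarrow>\<^sub>M count_space UNIV" by measurable
  ultimately show ?case by (simp add: int_add_meas)
qed

lemma SS_borel: "SS \<in> sets borel"
proof -
  have "SS = {t \<in> space borel. \<forall>m. \<exists>k. (((\<exists>n. fw n t = k) \<or> (\<exists>n. bw n t = k)) \<and>
      0 \<le> t - of_int m * a + of_int k * b \<and> t - of_int m * a + of_int k * b < c) \<and>
      (\<forall>k'. (((\<exists>n. fw n t = k') \<or> (\<exists>n. bw n t = k')) \<and>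
      0 \<le> t - of_int m * a + of_int k' * b \<and> t - of_int m * a + of_int k' * b < c) \<longrightarrow> k' = k)}"
    unfolding set_eq_iff S_Lam Good_def Lam_def W_def Ex1_def by simp
  also have "\<dots> \<in> sets borel" by measurable
  finally show ?thesis .
qed

lemma SS_leb: "SS \<in> sets lebesgue"
  using SS_borel by simp

definition mu :: "real set \<Rightarrow> real" where "mu A = measure lebesgue (SS \<inter> A)"

lemma lm: "SS \<inter> {x..<y} \<in> lmeasurable"
  by (rule bounded_set_imp_lmeasurable) (auto intro: SS_leb)

lemma mu_add: "x \<le> y \<Longrightarrow> y \<le> z \<Longrightarrow> mu {x..<z} = mu {x..<y} + mu {y..<z}"
proof -
  assume h: "x \<le> y" "y \<le> z"
  have e: "SS \<inter> {x..<z} = (SS \<inter> {x..<y}) \<union> (SS \<inter> {y..<z})" using h by auto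
  have d: "(SS \<inter> {x..<y}) \<inter> (SS \<inter> {y..<z}) = {}" by auto
  show ?thesis unfolding mu_def e using measure_Un3[OF lm lm, of x y y z] d by simp
qed

lemma mu_empty: "mu {x..<x} = 0" by (simp add: mu_def)

lemma Y_eq: "Yabc a b c t = (if 0 \<le> t then mu {0..<t} else - mu {t..<0})"
proof (cases "0 < t")
  case True then show ?thesis by (simp add: Yabc_def mu_def Int_commute)
next
  case False
  show ?thesis
  proof (cases "t = 0")
    case True then show ?thesis by (simp add: Yabc_def mu_def)
  next
    case F: False
    then have "t < 0" using False by simp
    then show ?thesis by (simp add: Yabc_def mu_def Int_commute)
  qed
qed

lemma Ydiff: "x \<le> y \<Longrightarrow> Yabc a b c y - Yabc a b c x = mu {x..<y}"
proof -
  assume h: "x \<le> y"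
  show ?thesis
  proof (cases "0 \<le> x")
    case True
    then show ?thesis using mu_add[of 0 x y] h by (simp add: Y_eq)
  next
    case False
    show ?thesis
    proof (cases "0 \<le> y")
      case True
      then show ?thesis using mu_add[of x 0 y] h False by (simp add: Y_eq)
    next
      case F2: False
      then show ?thesis using mu_add[of x y 0] h False by (simp add: Y_eq)
    qed
  qed
qed

lemma SS_per: "t \<in> SS \<Longrightarrow> t + of_int j * a \<in> SS"
  using S_iff[OF b0] good_per by blast

lemma SS_per_iff: "t + of_int j * a \<in> SS \<longleftrightarrow> t \<in> SS"
proof
  assume "t + of_int j * a \<in> SS"
  from SS_per[OF this, of "- j"] show "t \<in> SS" by simp
qed (rule SS_per)

lemma mu_transl:
  assumes "\<And>s. s \<in> SS \<inter> {x..<y} \<Longrightarrow> s + d \<in> SS"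
    and "\<And>s. s \<in> SS \<inter> {x + d..<y + d} \<Longrightarrow> s - d \<in> SS"
  shows "mu {x + d..<y + d} = mu {x..<y}"
proof -
  have "SS \<inter> {x + d..<y + d} = (+) d ` (SS \<inter> {x..<y})"
  proof
    show "SS \<inter> {x + d..<y + d} \<subseteq> (+) d ` (SS \<inter> {x..<y})"
    proof
      fix s assume s: "s \<in> SS \<inter> {x + d..<y + d}"
      then have "s - d \<in> SS \<inter> {x..<y}" using assms(2) by auto
      then show "s \<in> (+) d ` (SS \<inter> {x..<y})" by (intro image_eqI[of _ _ "s - d"]) auto
    qed
  next
    show "(+) d ` (SS \<inter> {x..<y}) \<subseteq> SS \<inter> {x + d..<y + d}"
      using assms(1) by (auto simp: add.commute)
  qed
  then show ?thesis unfolding mu_def by (simp add: measure_translation)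
qed

lemma mu_per: "x' = x + of_int j * a \<Longrightarrow> y' = y + of_int j * a \<Longrightarrow> mu {x'..<y'} = mu {x..<y}"
proof -
  assume h: "x' = x + of_int j * a" "y' = y + of_int j * a"
  have "mu {x + of_int j * a..<y + of_int j * a} = mu {x..<y}"
  proof (rule mu_transl)
    fix s assume "s \<in> SS \<inter> {x..<y}" then show "s + of_int j * a \<in> SS" using SS_per by blast
  next
    fix s assume "s \<in> SS \<inter> {x + of_int j * a..<y + of_int j * a}"
    then have "(s - of_int j * a) + of_int j * a \<in> SS" by simp
    then show "s - of_int j * a \<in> SS" using SS_per_iff by blast
  qed
  then show ?thesis using h by simp
qed

lemma mu_period: "mu {x..<x + a} = mu {0..<a}"
proof -
  define j where "j = \<lfloor>x/a\<rfloor>"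
  have j: "of_int j * a \<le> x" "x < of_int j * a + a" using floor_bounds[of x] by (auto simp: j_def)
  define r where "r = x - of_int j * a"
  have r: "0 \<le> r" "r < a" using j by (auto simp: r_def)
  have "mu {x..<x + a} = mu {x..<of_int j * a + a} + mu {of_int j * a + a..<x + a}"
    using j by (intro mu_add) auto
  also have "mu {x..<of_int j * a + a} = mu {r..<a}" by (rule mu_per[of _ _ j]) (auto simp: r_def)
  also have "mu {of_int j * a + a..<x + a} = mu {0..<r}" by (rule mu_per[of _ _ "j+1"]) (auto simp: r_def algebra_simps)
  also have "mu {r..<a} + mu {0..<r} = mu {0..<a}" using mu_add[of 0 r a] r by simp
  finally show ?thesis .
qed

lemma Yper1: "Yabc a b c (x + a) = Yabc a b c x + Yabc a b c a"
proof -
  have "Yabc a b c (x + a) - Yabc a b c x = mu {x..<x + a}" using a0 by (intro Ydiff) simp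
  also have "\<dots> = mu {0..<a}" by (rule mu_period)
  also have "\<dots> = Yabc a b c a" using a0 by (simp add: Y_eq)
  finally show ?thesis by simp
qed

lemma Yper: "Yabc a b c (x + of_int j * a) = Yabc a b c x + of_int j * Yabc a b c a"
proof (induction j rule: int_induct[where k=0])
  case base then show ?case by simp
next
  case (step1 i)
  have "Yabc a b c (x + of_int (i + 1) * a) = Yabc a b c ((x + of_int i * a) + a)"
    by (simp add: algebra_simps)
  also have "\<dots> = Yabc a b c (x + of_int i * a) + Yabc a b c a" by (rule Yper1)
  finally show ?case using step1 by (simp add: algebra_simps)
next
  case (step2 i)
  have "Yabc a b c (x + of_int i * a) = Yabc a b c ((x + of_int (i - 1) * a) + a)"
    by (simp add: algebra_simps)
  also have "\<dots> = Yabc a b c (x + of_int (i - 1) * a) + Yabc a b c a" by (rule Yper1)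
  finally show ?case using step2 by (simp add: algebra_simps)
qed

end


context abc begin

lemma S_intro: "0 \<in> \<Lambda> \<Longrightarrow> GG t \<Lambda> \<Longrightarrow> t \<in> SS"
  using S_iff[OF b0] by blast

lemma S_elim: assumes "t \<in> SS" obtains \<Lambda> where "0 \<in> \<Lambda>" "GG t \<Lambda>"
  using S_iff[OF b0] assms by blast

lemma S_next: "t \<in> SS \<Longrightarrow> t + of_int (g t) * b \<in> SS \<and> (rho t < C0 + a - b \<or> C0 \<le> rho t)"
proof -
  assume "t \<in> SS"
  then obtain \<Lambda> where z: "0 \<in> \<Lambda>" and G: "GG t \<Lambda>" by (rule S_elim)
  note ns = next_step[OF G z]
  have "GG (t + of_int (g t) * b) {k. k + g t \<in> \<Lambda>}" by (rule good_shift[OF G])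
  moreover have "0 \<in> {k. k + g t \<in> \<Lambda>}" using ns by simp
  ultimately have "t + of_int (g t) * b \<in> SS" by (rule S_intro[rotated])
  then show ?thesis using ns by blast
qed

lemma S_prev: "t \<in> SS \<Longrightarrow> t + of_int (- pv t) * b \<in> SS \<and> g (t + of_int (- pv t) * b) = pv t"
proof -
  assume "t \<in> SS"
  then obtain \<Lambda> where z: "0 \<in> \<Lambda>" and G: "GG t \<Lambda>" by (rule S_elim)
  note ps = prev_step[OF G z]
  have "GG (t + of_int (- pv t) * b) {k. k + (- pv t) \<in> \<Lambda>}" by (rule good_shift[OF G])
  moreover have "0 \<in> {k. k + (- pv t) \<in> \<Lambda>}" using ps by simp
  ultimately have "t + of_int (- pv t) * b \<in> SS" by (rule S_intro[rotated])
  then show ?thesis using ps by simp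
qed

lemma pv_cases: "pv t = L \<or> pv t = L + 1" by (simp add: pv_def)

lemma g_L: "of_int j * a + C0 \<le> s \<Longrightarrow> s < of_int j * a + a \<Longrightarrow> g s = L"
proof -
  assume h: "of_int j * a + C0 \<le> s" "s < of_int j * a + a"
  have "of_int j * a \<le> s" using h c0lo ab by linarith
  then have "rho s = s - of_int j * a" using rho_eq h by blast
  then show ?thesis using h c0lo ab by (simp add: g_def)
qed

lemma g_L1: "of_int j * a \<le> s \<Longrightarrow> s < of_int j * a + C0 + a - b \<Longrightarrow> g s = L + 1"
proof -
  assume h: "of_int j * a \<le> s" "s < of_int j * a + C0 + a - b"
  have "s < of_int j * a + a" using h c0hi ab by linarith
  then have "rho s = s - of_int j * a" using rho_eq h by blast
  then show ?thesis using h by (simp add: g_def)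
qed

lemma rho_split: "s = of_int \<lfloor>s/a\<rfloor> * a + rho s" by (simp add: rho_def)

lemma T1:
  assumes j: "of_int j * a + C0 \<le> x" "x \<le> y" "y \<le> of_int j * a + a"
  shows "mu {x + of_int L * b..<y + of_int L * b} = mu {x..<y}"
proof (rule mu_transl)
  fix s assume s: "s \<in> SS \<inter> {x..<y}"
  then have "g s = L" using j by (intro g_L[of j]) auto
  then show "s + of_int L * b \<in> SS" using S_next s by force
next
  fix s assume s: "s \<in> SS \<inter> {x + of_int L * b..<y + of_int L * b}"
  define s' where "s' = s + of_int (- pv s) * b"
  have sp: "s' \<in> SS" "g s' = pv s" using S_prev s by (auto simp: s'_def)
  show "s - of_int L * b \<in> SS"
  proof (cases "pv s = L")
    case True then show ?thesis using sp by (simp add: s'_def)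
  next
    case False
    then have pL: "pv s = L + 1" using pv_cases by blast
    then have "rho s' < C0 + a - b" using sp by (simp add: g_def split: if_splits)
    define i where "i = \<lfloor>s'/a\<rfloor>"
    have sr: "s' = of_int i * a + rho s'" using rho_split by (simp add: i_def)
    have r0: "0 \<le> rho s'" by (rule rho_bounds)
    have se: "s' = s - of_int L * b - b" using pL by (simp add: s'_def algebra_simps)
    have "of_int i * a < of_int j * a" using sr r0 se s j ab by auto
    then have "i < j" using int_less_of_mult[OF a0] by blast
    moreover have "of_int j * a < of_int (i + 1) * a"
      using sr se s j \<open>rho s' < C0 + a - b\<close> by (auto simp: algebra_simps)
    then have "j < i + 1" using int_less_of_mult[OF a0] by blast
    ultimately show ?thesis by simp
  qed
qed

lemma T2:
  assumes j: "of_int j * a \<le> x" "x \<le> y" "y \<le> of_int j * a + C0 + a - b"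
  shows "mu {x + of_int (L + 1) * b..<y + of_int (L + 1) * b} = mu {x..<y}"
proof (rule mu_transl)
  fix s assume s: "s \<in> SS \<inter> {x..<y}"
  then have "g s = L + 1" using j by (intro g_L1[of j]) auto
  then show "s + of_int (L + 1) * b \<in> SS" using S_next s by force
next
  fix s assume s: "s \<in> SS \<inter> {x + of_int (L + 1) * b..<y + of_int (L + 1) * b}"
  define s' where "s' = s + of_int (- pv s) * b"
  have sp: "s' \<in> SS" "g s' = pv s" using S_prev s by (auto simp: s'_def)
  show "s - of_int (L + 1) * b \<in> SS"
  proof (cases "pv s = L + 1")
    case True
    have "s - of_int (L + 1) * b = s'" using True by (simp add: s'_def algebra_simps)
    then show ?thesis using sp by simp
  next
    case False
    then have pL: "pv s = L" using pv_cases by blast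
    then have "\<not> rho s' < C0 + a - b" using sp L2 by (simp add: g_def split: if_splits)
    then have rc: "C0 \<le> rho s'" using S_next[OF sp(1)] by blast
    define i where "i = \<lfloor>s'/a\<rfloor>"
    have sr: "s' = of_int i * a + rho s'" using rho_split by (simp add: i_def)
    have r1: "rho s' < a" by (rule rho_bounds)
    have se: "s' = s - of_int (L + 1) * b + b" using pL by (simp add: s'_def algebra_simps)
    have "of_int i * a < of_int (j + 1) * a" using sr rc se s j by (auto simp: algebra_simps)
    then have "i < j + 1" using int_less_of_mult[OF a0] by blast
    moreover have "of_int j * a < of_int i * a"
      using sr se s j r1 ab by (auto simp: algebra_simps)
    then have "j < i" using int_less_of_mult[OF a0] by blast
    ultimately show ?thesis by simp
  qed
qed

lemma LbN: "of_int L * b = C1 + of_int N * a" using C1eq by simp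

lemma hole: "s \<in> SS \<Longrightarrow> C1 \<le> s \<Longrightarrow> s < C1 + b - a \<Longrightarrow> False"
proof -
  assume s: "s \<in> SS" "C1 \<le> s" "s < C1 + b - a"
  define s' where "s' = s + of_int (- pv s) * b"
  have sp: "s' \<in> SS" "g s' = pv s" using S_prev s by (auto simp: s'_def)
  define i where "i = \<lfloor>s'/a\<rfloor>"
  have sr: "s' = of_int i * a + rho s'" using rho_split by (simp add: i_def)
  have r0: "0 \<le> rho s'" "rho s' < a" by (rule rho_bounds)+
  define k where "k = i + N"
  show False
  proof (cases "pv s = L")
    case True
    then have "\<not> rho s' < C0 + a - b" using sp L2 by (simp add: g_def split: if_splits)
    then have rc: "C0 \<le> rho s'" using S_next[OF sp(1)] by blast
    have se: "s = s' + of_int L * b" using True by (simp add: s'_def)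
    have e: "s = of_int k * a + rho s' + C1" using se sr LbN by (simp add: k_def algebra_simps)
    have "of_int k * a < of_int 0 * a" using e s rc c0lo by simp
    then have "k < 0" using int_less_of_mult[OF a0] by blast
    moreover have "of_int (-1) * a < of_int k * a" using e s r0 by simp
    then have "-1 < k" using int_less_of_mult[OF a0] by blast
    ultimately show False by simp
  next
    case False
    then have pL: "pv s = L + 1" using pv_cases by blast
    then have rc: "rho s' < C0 + a - b" using sp by (simp add: g_def split: if_splits)
    have se: "s = s' + of_int L * b + b" using pL by (simp add: s'_def algebra_simps)
    have e: "s = of_int k * a + rho s' + C1 + b" using se sr LbN by (simp add: k_def algebra_simps)
    have "of_int k * a < of_int (-1) * a" using e s r0 by simp
    then have "k < -1" using int_less_of_mult[OF a0] by blast
    moreover have "of_int (-2) * a < of_int k * a" using e s rc c0hi by simp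
    then have "-2 < k" using int_less_of_mult[OF a0] by blast
    ultimately show False by simp
  qed
qed

lemma in_per_rho: "0 \<le> l \<Longrightarrow> u \<le> a \<Longrightarrow> in_per a l u t \<longleftrightarrow> l \<le> rho t \<and> rho t < u"
proof -
  assume h: "0 \<le> l" "u \<le> a"
  show ?thesis
  proof
    assume "in_per a l u t"
    then obtain k where k: "l \<le> t - of_int k * a" "t - of_int k * a < u" by (auto simp: in_per_def)
    then have "rho t = t - of_int k * a" using h by (intro rho_eq) auto
    then show "l \<le> rho t \<and> rho t < u" using k by simp
  next
    assume "l \<le> rho t \<and> rho t < u"
    then show "in_per a l u t" unfolding in_per_def rho_def by blast
  qed
qed

lemma main: "t \<in> SS \<Longrightarrow> \<exists>n::int. Yabc a b c (Rabc a b c t) - Yabc a b c t - Yabc a b c (C1 + b - a)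
             = of_int n * Yabc a b c a"
proof -
  assume tS: "t \<in> SS"
  define j where "j = \<lfloor>t/a\<rfloor>"
  have j: "of_int j * a \<le> t" "t < of_int j * a + a" using floor_bounds[of t] by (auto simp: j_def)
  have rj: "rho t = t - of_int j * a" by (simp add: rho_def j_def)
  have "0 < L" using L2 by linarith
  then have "0 < real_of_int L" by (simp only: of_int_pos)
  then have Lb0: "0 < of_int L * b" using b0 by (rule mult_pos_pos)
  have pos1: "0 \<le> C0 + a - b" "C0 + a - b \<le> a" "0 \<le> C0" "C0 \<le> a" using c0lo c0hi ab by auto
  have dis: "rho t < C0 + a - b \<or> C0 \<le> rho t" using S_next[OF tS] by blast
  define Y where "Y = Yabc a b c"
  show ?thesis
  proof (cases "rho t < C0 + a - b")
    case True
    have R: "Rabc a b c t = t + of_int (L + 1) * b"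
      using True in_per_rho[of 0 "C0 + a - b" t] pos1 rho_bounds[of t]
      by (simp add: Rabc_def algebra_simps)
    define d where "d = of_int (L + 1) * b"
    have d0: "0 < d" using Lb0 b0 by (simp add: d_def algebra_simps)
    have "Y (t + d) - Y t = mu {t..<t + d}" using d0 by (simp add: Y_def Ydiff)
    have m1: "mu {of_int j * a..<t + d} = mu {of_int j * a..<t} + mu {t..<t + d}"
      using j d0 by (intro mu_add) auto
    have m2: "mu {of_int j * a..<t + d} = mu {of_int j * a..<of_int j * a + d} + mu {of_int j * a + d..<t + d}"
      using j d0 by (intro mu_add) auto
    have m3: "mu {of_int j * a + d..<t + d} = mu {of_int j * a..<t}"
      unfolding d_def using j True rj by (intro T2) auto
    have m4: "mu {of_int j * a..<of_int j * a + d} = mu {0..<d}" by (rule mu_per[of _ _ j]) auto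
    have m5: "mu {0..<d} = Y d" using d0 by (simp add: Y_def Y_eq)
    have dd: "d = (C1 + b - a) + of_int (N + 1) * a" using LbN by (simp add: d_def algebra_simps)
    have "Y (t + d) - Y t = Y d" using m1 m2 m3 m4 m5 d0 by (simp add: Y_def Ydiff)
    also have "Y d = Y (C1 + b - a) + of_int (N + 1) * Y a" unfolding dd Y_def by (rule Yper)
    finally have "Y (t + d) - Y t - Y (C1 + b - a) = of_int (N + 1) * Y a" by simp
    then have "Yabc a b c (Rabc a b c t) - Yabc a b c t - Yabc a b c (C1 + b - a) = of_int (N + 1) * Yabc a b c a"
      unfolding R Y_def d_def .
    then show ?thesis by blast
  next
    case False
    then have rc: "C0 \<le> rho t" using dis by simp
    have R: "Rabc a b c t = t + of_int L * b"
      using False rc in_per_rho[of 0 "C0 + a - b" t] in_per_rho[of "C0 + a - b" C0 t]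
        in_per_rho[of C0 a t] pos1 rho_bounds[of t]
      by (simp add: Rabc_def)
    define d where "d = of_int L * b"
    have d0: "0 < d" using Lb0 by (simp add: d_def)
    define e where "e = of_int j * a + a"
    have m1: "mu {t..<e + d} = mu {t..<t + d} + mu {t + d..<e + d}"
      using j d0 by (intro mu_add) (auto simp: e_def)
    have m2: "mu {t..<e + d} = mu {t..<e} + mu {e..<e + d}"
      using j d0 by (intro mu_add) (auto simp: e_def)
    have m3: "mu {t + d..<e + d} = mu {t..<e}"
      unfolding d_def e_def using j rc rj by (intro T1) auto
    have m4: "mu {e..<e + d} = mu {0..<d}" by (rule mu_per[of _ _ "j+1"]) (auto simp: e_def algebra_simps)
    have m5: "mu {0..<d} = Y d" using d0 by (simp add: Y_def Y_eq)
    have dd: "d = C1 + of_int N * a" using LbN by (simp add: d_def)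
    have "Y (t + d) - Y t = Y d" using m1 m2 m3 m4 m5 d0 by (simp add: Y_def Ydiff)
    also have "Y d = Y C1 + of_int N * Y a" unfolding dd Y_def by (rule Yper)
    finally have A: "Y (t + d) - Y t = Y C1 + of_int N * Y a" .
    have "Y (C1 + b - a) - Y C1 = mu {C1..<C1 + b - a}" using ab by (simp add: Y_def Ydiff)
    also have "SS \<inter> {C1..<C1 + b - a} = {}" using hole by auto
    then have "mu {C1..<C1 + b - a} = 0" by (simp add: mu_def)
    finally have "Y (t + d) - Y t - Y (C1 + b - a) = of_int N * Y a" using A by simp
    then have "Yabc a b c (Rabc a b c t) - Yabc a b c t - Yabc a b c (C1 + b - a) = of_int N * Yabc a b c a"
      unfolding R Y_def d_def .
    then show ?thesis by blast
  qed
qed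

end

theorem theorem5p5:
  fixes a b c :: real
  assumes "0 < a" "a < b" "b < c"
    and "\<lfloor>c / b\<rfloor> \<ge> 2"
    and "b - a < c0 a b c" "c0 a b c < a"
    and "0 \<le> c1 a b c" "c1 a b c \<le> 2 * a - b"
    and "Sabc a b c \<noteq> {}"
    and "a / b \<notin> \<rat> \<or>
         (\<exists>p q :: int. 0 < p \<and> 0 < q \<and> coprime p q \<and> a / b = of_int p / of_int q \<and>
            (\<exists>k::int. c = of_int k * (b / of_int q)))"
  shows "\<forall>t\<in>Sabc a b c. \<exists>n::int.
           Yabc a b c (Rabc a b c t) - Yabc a b c t - Yabc a b c (c1 a b c + b - a)
             = of_int n * Yabc a b c a"
proof -
  interpret abc a b c using assms by unfold_locales auto
  show ?thesis using main by blast
qed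


end
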